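(* Let $\mathcal{T}$ be an unweighted tree on $L$ vertices such that (a) there is a vertex of degree $\ge 2$ from which all leaves are at the same distance, and (b) every other non-leaf vertex has degree $\ge 3$ (e.g. a complete binary tree). Let $f:\mathbb{N}\to\mathbb{R}$ be arbitrary. Then for every $\mathbf{x}\in\mathbb{R}^L$, the product $\mathbf{M}\mathbf{x}$ with $\mathbf{M} = [f(\mathrm{dist}_{\mathcal{T}}(i,j))]_{i,j=1,\dots,L}$ can be computed in time $O(L\log L)$.
   Context: $\mathrm{dist}_{\mathcal{T}}(i,j)$ is the number of edges on the path between $i$ and $j$. Values of $f$ are assumed available in $O(1)$ time each; time counts arithmetic operations. *)

theory Defs
  imports "HOL-Analysis.Analysis"
begin

definition simple_graph :: "nat \<Rightarrow> (nat \<Rightarrow> nat \<Rightarrow> bool) \<Rightarrow> bool" where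
  "simple_graph L E \<longleftrightarrow> (\<forall>u v. E u v \<longrightarrow> u < L \<and> v < L \<and> u \<noteq> v \<and> E v u)"

definition is_walk :: "(nat \<Rightarrow> nat \<Rightarrow> bool) \<Rightarrow> nat list \<Rightarrow> bool" where
  "is_walk E xs \<longleftrightarrow> xs \<noteq> [] \<and> (\<forall>i. Suc i < length xs \<longrightarrow> E (xs ! i) (xs ! Suc i))"

definition graph_connected :: "nat \<Rightarrow> (nat \<Rightarrow> nat \<Rightarrow> bool) \<Rightarrow> bool" where
  "graph_connected L E \<longleftrightarrow>
     (\<forall>u v. u < L \<longrightarrow> v < L \<longrightarrow> (\<exists>xs. is_walk E xs \<and> hd xs = u \<and> last xs = v))"

definition has_cycle :: "(nat \<Rightarrow> nat \<Rightarrow> bool) \<Rightarrow> bool" where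
  "has_cycle E \<longleftrightarrow> (\<exists>xs. length xs \<ge> 3 \<and> distinct xs \<and> is_walk E xs \<and> E (last xs) (hd xs))"

definition is_tree :: "nat \<Rightarrow> (nat \<Rightarrow> nat \<Rightarrow> bool) \<Rightarrow> bool" where
  "is_tree L E \<longleftrightarrow> L \<ge> 1 \<and> simple_graph L E \<and> graph_connected L E \<and> \<not> has_cycle E"

definition degree :: "nat \<Rightarrow> (nat \<Rightarrow> nat \<Rightarrow> bool) \<Rightarrow> nat \<Rightarrow> nat" where
  "degree L E v = card {u. u < L \<and> E v u}"

definition is_leaf :: "nat \<Rightarrow> (nat \<Rightarrow> nat \<Rightarrow> bool) \<Rightarrow> nat \<Rightarrow> bool" where
  "is_leaf L E v \<longleftrightarrow> v < L \<and> degree L E v = 1"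

definition tree_dist :: "(nat \<Rightarrow> nat \<Rightarrow> bool) \<Rightarrow> nat \<Rightarrow> nat \<Rightarrow> nat" where
  "tree_dist E i j = (LEAST k. \<exists>xs. is_walk E xs \<and> hd xs = i \<and> last xs = j \<and> length xs = Suc k)"

definition good_tree :: "nat \<Rightarrow> (nat \<Rightarrow> nat \<Rightarrow> bool) \<Rightarrow> bool" where
  "good_tree L E \<longleftrightarrow> is_tree L E \<and>
     (\<exists>r < L. degree L E r \<ge> 2 \<and>
        (\<exists>h. \<forall>v. is_leaf L E v \<longrightarrow> tree_dist E r v = h) \<and>
        (\<forall>v < L. v \<noteq> r \<and> \<not> is_leaf L E v \<longrightarrow> degree L E v \<ge> 3))"

text \<open>Each instruction appends one new real value to the memory, computed from earlier
  memory cells (or a constant); cost = number of instructions = number of arithmetic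
  operations.\<close>

datatype instr = Add nat nat | Sub nat nat | Mul nat nat | Div nat nat | Const real

fun step :: "real list \<Rightarrow> instr \<Rightarrow> real list" where
  "step m (Add a b) = m @ [m ! a + m ! b]"
| "step m (Sub a b) = m @ [m ! a - m ! b]"
| "step m (Mul a b) = m @ [m ! a * m ! b]"
| "step m (Div a b) = m @ [m ! a / m ! b]"
| "step m (Const c) = m @ [c]"

definition run :: "instr list \<Rightarrow> real list \<Rightarrow> real list" where
  "run p inp = foldl step inp p"

end

theory Submission
  imports Defs
begin


datatype vexp = VLin "nat list" "nat list" | VDot "(nat \<times> nat) list"

fun evalv :: "(nat \<Rightarrow> real) \<Rightarrow> vexp \<Rightarrow> real" where
  "evalv g (VLin ps ns) = sum_list (map g ps) - sum_list (map g ns)"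
| "evalv g (VDot ps) = sum_list (map (\<lambda>(a,b). g a * g b) ps)"

fun refs :: "vexp \<Rightarrow> nat set" where
  "refs (VLin ps ns) = set ps \<union> set ns"
| "refs (VDot ps) = fst ` set ps \<union> snd ` set ps"

fun vcost :: "vexp \<Rightarrow> nat" where
  "vcost (VLin ps ns) = 1 + length ps + length ns"
| "vcost (VDot ps) = 1 + 2 * length ps"

fun adds :: "nat list \<Rightarrow> nat \<Rightarrow> nat list \<Rightarrow> instr list" where
  "adds pos n [] = []"
| "adds pos n (p#ps) = Add (n - 1) (pos!p) # adds pos (Suc n) ps"

fun subs :: "nat list \<Rightarrow> nat \<Rightarrow> nat list \<Rightarrow> instr list" where
  "subs pos n [] = []"
| "subs pos n (p#ps) = Sub (n - 1) (pos!p) # subs pos (Suc n) ps"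

fun dots :: "nat list \<Rightarrow> nat \<Rightarrow> (nat \<times> nat) list \<Rightarrow> instr list" where
  "dots pos n [] = []"
| "dots pos n ((a,b)#ps) = Mul (pos!a) (pos!b) # Add (n - 1) n # dots pos (n+2) ps"

fun cexp :: "nat list \<Rightarrow> nat \<Rightarrow> vexp \<Rightarrow> instr list" where
  "cexp pos n (VLin ps ns) = Const 0 # adds pos (Suc n) ps @ subs pos (Suc n + length ps) ns"
| "cexp pos n (VDot ps) = Const 0 # dots pos (Suc n) ps"

fun compile_vs :: "nat list \<Rightarrow> nat \<Rightarrow> vexp list \<Rightarrow> instr list \<times> nat list" where
  "compile_vs pos n [] = ([], pos)"
| "compile_vs pos n (e#es) = (let n' = n + vcost e; r = compile_vs (pos @ [n' - 1]) n' es in (cexp pos n e @ fst r, snd r))"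

fun vrun :: "real list \<Rightarrow> vexp list \<Rightarrow> real list" where
  "vrun vs [] = vs"
| "vrun vs (e#es) = vrun (vs @ [evalv (nth vs) e]) es"

lemma run_Nil[simp]: "run [] m = m" by (simp add: run_def)
lemma run_Cons[simp]: "run (i#p) m = run p (step m i)" by (simp add: run_def)
lemma run_append[simp]: "run (p@q) m = run q (run p m)" by (simp add: run_def)

lemma adds_run:
  "length m = n \<Longrightarrow> n \<ge> 1 \<Longrightarrow> (\<forall>p\<in>set ps. pos!p < n) \<Longrightarrow>
   \<exists>ys. run (adds pos n ps) m = m @ ys \<and> length ys = length ps \<and>
        last (m @ ys) = last m + sum_list (map (\<lambda>p. m!(pos!p)) ps)"
proof (induction ps arbitrary: m n)
  case Nil then show ?case by simp
next
  case (Cons p ps)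
  let ?m1 = "m @ [last m + m!(pos!p)]"
  have l: "m ! (n - 1) = last m" using Cons.prems by (cases m rule: rev_cases) (auto simp: nth_append)
  have "\<exists>ys. run (adds pos (Suc n) ps) ?m1 = ?m1 @ ys \<and> length ys = length ps \<and>
        last (?m1 @ ys) = last ?m1 + sum_list (map (\<lambda>p. ?m1!(pos!p)) ps)"
    using Cons.prems by (intro Cons.IH) auto
  then obtain ys where ys: "run (adds pos (Suc n) ps) ?m1 = ?m1 @ ys" "length ys = length ps"
    "last (?m1 @ ys) = last ?m1 + sum_list (map (\<lambda>p. ?m1!(pos!p)) ps)" by blast
  have e: "map (\<lambda>p. ?m1!(pos!p)) ps = map (\<lambda>p. m!(pos!p)) ps"
    using Cons.prems by (auto simp: nth_append)
  show ?case using ys l e by (intro exI[of _ "[last m + m!(pos!p)] @ ys"]) auto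
qed

lemma subs_run:
  "length m = n \<Longrightarrow> n \<ge> 1 \<Longrightarrow> (\<forall>p\<in>set ps. pos!p < n) \<Longrightarrow>
   \<exists>ys. run (subs pos n ps) m = m @ ys \<and> length ys = length ps \<and>
        last (m @ ys) = last m - sum_list (map (\<lambda>p. m!(pos!p)) ps)"
proof (induction ps arbitrary: m n)
  case Nil then show ?case by simp
next
  case (Cons p ps)
  let ?m1 = "m @ [last m - m!(pos!p)]"
  have l: "m ! (n - 1) = last m" using Cons.prems by (cases m rule: rev_cases) (auto simp: nth_append)
  have "\<exists>ys. run (subs pos (Suc n) ps) ?m1 = ?m1 @ ys \<and> length ys = length ps \<and>
        last (?m1 @ ys) = last ?m1 - sum_list (map (\<lambda>p. ?m1!(pos!p)) ps)"
    using Cons.prems by (intro Cons.IH) auto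
  then obtain ys where ys: "run (subs pos (Suc n) ps) ?m1 = ?m1 @ ys" "length ys = length ps"
    "last (?m1 @ ys) = last ?m1 - sum_list (map (\<lambda>p. ?m1!(pos!p)) ps)" by blast
  have e: "map (\<lambda>p. ?m1!(pos!p)) ps = map (\<lambda>p. m!(pos!p)) ps"
    using Cons.prems by (auto simp: nth_append)
  show ?case using ys l e by (intro exI[of _ "[last m - m!(pos!p)] @ ys"]) auto
qed

lemma dots_run:
  "length m = n \<Longrightarrow> n \<ge> 1 \<Longrightarrow> (\<forall>(a,b)\<in>set ps. pos!a < n \<and> pos!b < n) \<Longrightarrow>
   \<exists>ys. run (dots pos n ps) m = m @ ys \<and> length ys = 2 * length ps \<and>
        last (m @ ys) = last m + sum_list (map (\<lambda>(a,b). m!(pos!a) * m!(pos!b)) ps)"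
proof (induction ps arbitrary: m n)
  case Nil then show ?case by simp
next
  case (Cons ab ps)
  obtain a b where ab: "ab = (a,b)" by (cases ab)
  let ?q = "m!(pos!a) * m!(pos!b)"
  let ?m1 = "m @ [?q, last m + ?q]"
  have l: "m ! (n - 1) = last m" using Cons.prems by (cases m rule: rev_cases) (auto simp: nth_append)
  have st: "step (step m (Mul (pos!a) (pos!b))) (Add (n - 1) n) = ?m1"
    using Cons.prems l ab by (simp add: nth_append)
  have "\<exists>ys. run (dots pos (n+2) ps) ?m1 = ?m1 @ ys \<and> length ys = 2 * length ps \<and>
        last (?m1 @ ys) = last ?m1 + sum_list (map (\<lambda>(a,b). ?m1!(pos!a) * ?m1!(pos!b)) ps)"
    using Cons.prems by (intro Cons.IH) auto
  then obtain ys where ys: "run (dots pos (n+2) ps) ?m1 = ?m1 @ ys" "length ys = 2 * length ps"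
    "last (?m1 @ ys) = last ?m1 + sum_list (map (\<lambda>(a,b). ?m1!(pos!a) * ?m1!(pos!b)) ps)" by blast
  have e: "map (\<lambda>(a,b). ?m1!(pos!a) * ?m1!(pos!b)) ps = map (\<lambda>(a,b). m!(pos!a) * m!(pos!b)) ps"
    using Cons.prems by (auto simp: nth_append)
  show ?case using ys st e ab by (intro exI[of _ "[?q, last m + ?q] @ ys"]) auto
qed

lemma len_adds[simp]: "length (adds pos n ps) = length ps" by (induction ps arbitrary: n) auto
lemma len_subs[simp]: "length (subs pos n ps) = length ps" by (induction ps arbitrary: n) auto
lemma len_dots[simp]: "length (dots pos n ps) = 2 * length ps" by (induction ps arbitrary: n) auto
lemma len_cexp[simp]: "length (cexp pos n e) = vcost e" by (cases e) auto

lemma cexp_run: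
  assumes "length m = n" "\<forall>t\<in>refs e. pos!t < n"
  shows "\<exists>ys. run (cexp pos n e) m = m @ ys \<and> length ys = vcost e \<and>
        last (m @ ys) = evalv (\<lambda>t. m!(pos!t)) e"
proof (cases e)
  case (VLin ps ns)
  let ?m0 = "m @ [0]"
  have pp: "\<forall>p\<in>set ps. pos!p < Suc n" using assms VLin by (auto intro: less_SucI)
  obtain ys where ys: "run (adds pos (Suc n) ps) ?m0 = ?m0 @ ys" "length ys = length ps"
    "last (?m0 @ ys) = last ?m0 + sum_list (map (\<lambda>p. ?m0!(pos!p)) ps)"
    using adds_run[of ?m0 "Suc n" ps pos, OF _ _ pp] assms by auto
  have nn0: "\<forall>p\<in>set ns. pos!p < n" using assms VLin by auto
  have nn: "\<forall>p\<in>set ns. pos!p < Suc n + length ps" using nn0 by (auto simp: less_Suc_eq trans_less_add1)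
  obtain zs where zs: "run (subs pos (Suc n + length ps) ns) (?m0 @ ys) = (?m0 @ ys) @ zs" "length zs = length ns"
    "last ((?m0 @ ys) @ zs) = last (?m0 @ ys) - sum_list (map (\<lambda>p. (?m0 @ ys)!(pos!p)) ns)"
    using subs_run[of "?m0 @ ys" "Suc n + length ps" ns pos, OF _ _ nn] assms ys by auto
  have e1: "sum_list (map (\<lambda>p. ?m0!(pos!p)) ps) = sum_list (map (\<lambda>p. m!(pos!p)) ps)"
    using assms VLin by (auto simp: nth_append intro!: arg_cong[where f=sum_list])
  have e2: "sum_list (map (\<lambda>p. (?m0 @ ys)!(pos!p)) ns) = sum_list (map (\<lambda>p. m!(pos!p)) ns)"
    using assms VLin by (auto simp: nth_append intro!: arg_cong[where f=sum_list])
  show ?thesis using ys zs e1 e2 VLin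
    by (intro exI[of _ "[0] @ ys @ zs"]) auto
next
  case (VDot ps)
  let ?m0 = "m @ [0]"
  have dd: "\<forall>(a,b)\<in>set ps. pos!a < Suc n \<and> pos!b < Suc n"
  proof
    fix ab assume ab: "ab \<in> set ps"
    obtain a1 b1 where [simp]: "ab = (a1,b1)" by (cases ab)
    have "a1 \<in> refs e" "b1 \<in> refs e" using ab VDot by force+
    then show "case ab of (a,b) \<Rightarrow> pos!a < Suc n \<and> pos!b < Suc n" using assms(2) by (auto intro: less_SucI)
  qed
  obtain ys where ys: "run (dots pos (Suc n) ps) ?m0 = ?m0 @ ys" "length ys = 2 * length ps"
    "last (?m0 @ ys) = last ?m0 + sum_list (map (\<lambda>(a,b). ?m0!(pos!a) * ?m0!(pos!b)) ps)"
    using dots_run[of ?m0 "Suc n" ps pos, OF _ _ dd] assms by auto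
  have e1: "sum_list (map (\<lambda>(a,b). ?m0!(pos!a) * ?m0!(pos!b)) ps) = sum_list (map (\<lambda>(a,b). m!(pos!a) * m!(pos!b)) ps)"
  proof (rule arg_cong[where f=sum_list], rule map_cong[OF refl])
    fix ab assume ab: "ab \<in> set ps"
    obtain a1 b1 where [simp]: "ab = (a1,b1)" by (cases ab)
    have "a1 \<in> refs e" "b1 \<in> refs e" using ab VDot by force+
    then have "pos!a1 < n" "pos!b1 < n" using assms(2) by auto
    then show "(\<lambda>(a,b). ?m0!(pos!a) * ?m0!(pos!b)) ab = (\<lambda>(a,b). m!(pos!a) * m!(pos!b)) ab"
      using assms(1) by (simp add: nth_append)
  qed
  show ?thesis using ys e1 VDot
    by (intro exI[of _ "[0] @ ys"]) auto
qed

lemma evalv_cong: "(\<forall>t\<in>refs e. g t = g' t) \<Longrightarrow> evalv g e = evalv g' e"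
proof (cases e)
  case (VLin ps ns)
  assume a: "\<forall>t\<in>refs e. g t = g' t"
  then have "map g ps = map g' ps" "map g ns = map g' ns" using VLin by auto
  then show ?thesis using VLin by (metis evalv.simps(1))
next
  case (VDot ps)
  assume a: "\<forall>t\<in>refs e. g t = g' t"
  have "map (\<lambda>(a,b). g a * g b) ps = map (\<lambda>(a,b). g' a * g' b) ps"
  proof (rule map_cong[OF refl])
    fix ab assume ab: "ab \<in> set ps"
    obtain a1 b1 where [simp]: "ab = (a1,b1)" by (cases ab)
    have "a1 \<in> refs e" "b1 \<in> refs e" using ab VDot by force+
    then show "(\<lambda>(a,b). g a * g b) ab = (\<lambda>(a,b). g' a * g' b) ab" using a by simp
  qed
  then show ?thesis using VDot by (metis evalv.simps(2))
qed

lemma comp_run: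
  assumes "length m = n" "length pos = length vs"
    "\<forall>i<length vs. pos!i < n \<and> m!(pos!i) = vs!i"
    "\<forall>i<length es. \<forall>t\<in>refs (es!i). t < length vs + i"
  shows "length (snd (compile_vs pos n es)) = length (vrun vs es) \<and>
    (\<forall>i<length (vrun vs es). snd (compile_vs pos n es) ! i < length (run (fst (compile_vs pos n es)) m) \<and>
       run (fst (compile_vs pos n es)) m ! (snd (compile_vs pos n es) ! i) = vrun vs es ! i) \<and>
    length (fst (compile_vs pos n es)) = sum_list (map vcost es)"
  using assms
proof (induction es arbitrary: pos vs m n)
  case Nil then show ?case by simp
next
  case (Cons e es)
  have r: "\<forall>t\<in>refs e. t < length vs" using Cons.prems(4) by force
  then have r2: "\<forall>t\<in>refs e. pos!t < n" using Cons.prems(3) by auto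
  obtain ys where ys: "run (cexp pos n e) m = m @ ys" "length ys = vcost e"
    "last (m @ ys) = evalv (\<lambda>t. m!(pos!t)) e"
    using cexp_run[OF Cons.prems(1) r2] by blast
  have ev: "evalv (\<lambda>t. m!(pos!t)) e = evalv (nth vs) e"
    using r Cons.prems(3) by (intro evalv_cong) auto
  have ysne: "ys \<noteq> []" using ys(2) by (cases e) auto
  have vc1: "vcost e \<ge> 1" by (cases e) auto
  let ?n' = "n + vcost e"
  let ?pos = "pos @ [?n' - 1]"
  let ?vs = "vs @ [evalv (nth vs) e]"
  have lastidx: "(m @ ys) ! (?n' - 1) = evalv (nth vs) e"
    using ys ev ysne Cons.prems(1) by (simp add: last_conv_nth)
  have IH: "length (snd (compile_vs ?pos ?n' es)) = length (vrun ?vs es) \<and>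
    (\<forall>i<length (vrun ?vs es). snd (compile_vs ?pos ?n' es) ! i < length (run (fst (compile_vs ?pos ?n' es)) (m@ys)) \<and>
       run (fst (compile_vs ?pos ?n' es)) (m@ys) ! (snd (compile_vs ?pos ?n' es) ! i) = vrun ?vs es ! i) \<and>
    length (fst (compile_vs ?pos ?n' es)) = sum_list (map vcost es)"
  proof (rule Cons.IH)
    show "length (m @ ys) = ?n'" using ys Cons.prems(1) by simp
    show "length ?pos = length ?vs" using Cons.prems(2) by simp
    show "\<forall>i<length ?vs. ?pos!i < ?n' \<and> (m@ys)!(?pos!i) = ?vs!i"
    proof (intro allI impI)
      fix i assume i: "i < length ?vs"
      show "?pos!i < ?n' \<and> (m@ys)!(?pos!i) = ?vs!i"
      proof (cases "i < length vs")
        case True then show ?thesis using Cons.prems(1,2,3) by (auto simp: nth_append)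
      next
        case False then have "i = length vs" using i by simp
        then show ?thesis using Cons.prems(2) lastidx ysne ys(2) vc1 by (simp add: nth_append)
      qed
    qed
    show "\<forall>i<length es. \<forall>t\<in>refs (es!i). t < length ?vs + i"
      using Cons.prems(4) by fastforce
  qed
  show ?case using IH ys by (simp add: Let_def)
qed

lemma vrun_spec:
  assumes "\<forall>t<length vs. vs!t = S t"
    "\<forall>i<length es. (\<forall>t\<in>refs (es!i). t < length vs + i) \<and> evalv S (es!i) = S (length vs + i)"
  shows "length (vrun vs es) = length vs + length es \<and> (\<forall>t<length vs + length es. vrun vs es ! t = S t)"
  using assms
proof (induction es arbitrary: vs)
  case Nil then show ?case by simp
next
  case (Cons e es)
  have r: "\<forall>t\<in>refs e. t < length vs" "evalv S e = S (length vs)" using Cons.prems(2) by force+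
  have "evalv (nth vs) e = evalv S e" using r Cons.prems(1) by (intro evalv_cong) auto
  then have v: "\<forall>t<length (vs @ [evalv (nth vs) e]). (vs @ [evalv (nth vs) e])!t = S t"
    using r Cons.prems(1) by (auto simp: nth_append less_Suc_eq)
  have "\<forall>i<length es. (\<forall>t\<in>refs (es!i). t < length (vs @ [evalv (nth vs) e]) + i) \<and>
      evalv S (es!i) = S (length (vs @ [evalv (nth vs) e]) + i)"
    using Cons.prems(2) by fastforce
  from Cons.IH[OF v this] show ?case by simp
qed




lemma last_take_nth_conv: "k < length xs \<Longrightarrow> last (take (Suc k) xs) = xs ! k"
  by (simp add: take_Suc_conv_app_nth)

lemma is_walk_single[simp]: "is_walk E [x]" by (simp add: is_walk_def)

lemma is_walk_Cons: "xs \<noteq> [] \<Longrightarrow> is_walk E (x # xs) \<longleftrightarrow> E x (hd xs) \<and> is_walk E xs"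
  unfolding is_walk_def
  apply (cases xs)
   apply simp
  apply (auto simp: nth_Cons split: nat.splits)
  done

lemma is_walk_append:
  "xs \<noteq> [] \<Longrightarrow> ys \<noteq> [] \<Longrightarrow> is_walk E (xs @ ys) \<longleftrightarrow> is_walk E xs \<and> is_walk E ys \<and> E (last xs) (hd ys)"
proof (induction xs)
  case Nil then show ?case by simp
next
  case (Cons x xs)
  show ?case
  proof (cases "xs = []")
    case True then show ?thesis using Cons.prems by (auto simp: is_walk_Cons)
  next
    case False
    then show ?thesis using Cons by (simp add: is_walk_Cons)
  qed
qed

lemma is_walk_rev: "(\<And>u v. E u v \<Longrightarrow> E v u) \<Longrightarrow> is_walk E xs \<Longrightarrow> is_walk E (rev xs)"
proof (induction xs)
  case Nil then show ?case by (simp add: is_walk_def)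
next
  case (Cons x xs)
  show ?case
  proof (cases "xs = []")
    case True then show ?thesis by simp
  next
    case False
    then have "is_walk E xs" "E x (hd xs)" using Cons.prems is_walk_Cons by blast+
    then show ?thesis using Cons False by (simp add: is_walk_append last_rev)
  qed
qed

lemma is_walk_take: "is_walk E xs \<Longrightarrow> 0 < k \<Longrightarrow> is_walk E (take k xs)"
  unfolding is_walk_def by (cases xs) auto

lemma is_walk_drop: "is_walk E xs \<Longrightarrow> k < length xs \<Longrightarrow> is_walk E (drop k xs)"
  unfolding is_walk_def by auto

locale tr =
  fixes L :: nat and E :: "nat \<Rightarrow> nat \<Rightarrow> bool"
  assumes tree: "is_tree L E"
begin

abbreviation dist where "dist \<equiv> tree_dist E"

lemma sg: "simple_graph L E" using tree by (simp add: is_tree_def)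
lemma esym: "E u v \<Longrightarrow> E v u" using sg by (simp add: simple_graph_def)
lemma ein: "E u v \<Longrightarrow> u < L \<and> v < L \<and> u \<noteq> v" using sg by (simp add: simple_graph_def)
lemma nocyc: "\<not> has_cycle E" using tree by (simp add: is_tree_def)
lemma conn: "u < L \<Longrightarrow> v < L \<Longrightarrow> \<exists>xs. is_walk E xs \<and> hd xs = u \<and> last xs = v"
  using tree by (simp add: is_tree_def graph_connected_def)

lemma dist_le: "is_walk E xs \<Longrightarrow> hd xs = u \<Longrightarrow> last xs = v \<Longrightarrow> dist u v \<le> length xs - 1"
  unfolding tree_dist_def
  apply (rule Least_le)
  apply (rule exI[of _ xs])
  apply (auto simp: is_walk_def)
  done

lemma dist_path: "u < L \<Longrightarrow> v < L \<Longrightarrow>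
  \<exists>xs. is_walk E xs \<and> hd xs = u \<and> last xs = v \<and> length xs = Suc (dist u v)"
proof -
  assume a: "u < L" "v < L"
  obtain xs where xs: "is_walk E xs" "hd xs = u" "last xs = v" using conn[OF a] by blast
  then have ne: "xs \<noteq> []" by (simp add: is_walk_def)
  have "\<exists>k xs. is_walk E xs \<and> hd xs = u \<and> last xs = v \<and> length xs = Suc k"
    using xs ne by (intro exI[of _ "length xs - 1"] exI[of _ xs]) auto
  then show ?thesis unfolding tree_dist_def by (rule LeastI_ex)
qed

lemma dist_self[simp]: "dist u u = 0"
  using dist_le[of "[u]" u u] by simp

lemma dist_0: "u < L \<Longrightarrow> v < L \<Longrightarrow> dist u v = 0 \<Longrightarrow> u = v"
proof -
  assume a: "u < L" "v < L" "dist u v = 0"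
  obtain xs where "is_walk E xs" "hd xs = u" "last xs = v" "length xs = Suc 0"
    using dist_path[OF a(1,2)] a(3) by auto
  then show ?thesis by (cases xs) auto
qed

lemma dist_edge: "E u v \<Longrightarrow> dist u v = 1"
proof -
  assume e: "E u v"
  have "is_walk E [u,v]" using e by (simp add: is_walk_def nth_Cons split: nat.splits)
  then have "dist u v \<le> 1" using dist_le[of "[u,v]" u v] by simp
  moreover have "dist u v \<noteq> 0" using dist_0 ein[OF e] by blast
  ultimately show ?thesis by simp
qed

lemma dist_sym: "u < L \<Longrightarrow> v < L \<Longrightarrow> dist u v = dist v u"
proof -
  have *: "dist a b \<le> dist b a" if ab: "a < L" "b < L" for a b
  proof -
    obtain xs where xs: "is_walk E xs" "hd xs = b" "last xs = a" "length xs = Suc (dist b a)"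
      using dist_path[OF ab(2) ab(1)] by blast
    have ne: "xs \<noteq> []" using xs by auto
    have "is_walk E (rev xs)" using is_walk_rev[of E xs] esym xs by blast
    then show ?thesis using dist_le[of "rev xs" a b] xs ne by (simp add: hd_rev last_rev)
  qed
  assume "u < L" "v < L" then show ?thesis using *[of u v] *[of v u] by simp
qed

lemma dist_tri: "u < L \<Longrightarrow> v < L \<Longrightarrow> w < L \<Longrightarrow> dist u w \<le> dist u v + dist v w"
proof -
  assume a: "u < L" "v < L" "w < L"
  obtain xs where xs: "is_walk E xs" "hd xs = u" "last xs = v" "length xs = Suc (dist u v)"
    using dist_path[OF a(1,2)] by blast
  obtain ys where ys: "is_walk E ys" "hd ys = v" "last ys = w" "length ys = Suc (dist v w)"
    using dist_path[OF a(2,3)] by blast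
  show ?thesis
  proof (cases "tl ys = []")
    case True
    then have "v = w" using ys by (cases ys) auto
    then show ?thesis by simp
  next
    case False
    have "1 < length ys" using False by (cases ys) auto
    then have w1: "is_walk E (tl ys)" using is_walk_drop[OF ys(1), of 1] by (simp add: drop_Suc)
    have "E (ys!0) (ys!1)" using ys(1) False unfolding is_walk_def by (cases ys) auto
    moreover have "ys!0 = v" using ys by (cases ys) auto
    moreover have "hd (tl ys) = ys!1" using False by (cases ys) (auto simp: hd_conv_nth)
    ultimately have e: "E (last xs) (hd (tl ys))" using xs by simp
    have xsne: "xs \<noteq> []" using xs by auto
    have "is_walk E (xs @ tl ys)" using is_walk_append[OF xsne False] xs(1) w1 e by simp
    moreover have "hd (xs @ tl ys) = u" using xsne xs by simp
    moreover have "last (xs @ tl ys) = w" using False ys by (simp add: last_tl)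
    ultimately have "dist u w \<le> length (xs @ tl ys) - 1" by (rule dist_le)
    then show ?thesis using xs ys by simp
  qed
qed

lemma walk_in: "is_walk E xs \<Longrightarrow> hd xs < L \<Longrightarrow> k < length xs \<Longrightarrow> xs ! k < L"
proof -
  assume a: "is_walk E xs" "hd xs < L" "k < length xs"
  show ?thesis
  proof (cases k)
    case 0 then show ?thesis using a by (cases xs) auto
  next
    case (Suc k')
    then have "E (xs!k') (xs!k)" using a unfolding is_walk_def by auto
    then show ?thesis using ein by blast
  qed
qed

lemma shortest:
  assumes "is_walk E xs" "hd xs = u" "last xs = v" "length xs = Suc (dist u v)" "u < L" "v < L"
    "k < length xs"
  shows "xs ! k < L" "dist (xs!k) v = dist u v - k"
proof -
  show in1: "xs ! k < L" using walk_in assms by simp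
  have ne: "xs \<noteq> []" using assms by auto
  have "is_walk E (drop k xs)" using is_walk_drop assms by blast
  moreover have "hd (drop k xs) = xs ! k" using assms by (simp add: hd_drop_conv_nth)
  moreover have "last (drop k xs) = v" using assms by simp
  ultimately have "dist (xs!k) v \<le> length (drop k xs) - 1" by (rule dist_le)
  then have d1: "dist (xs!k) v \<le> dist u v - k" using assms(4) by simp
  have "is_walk E (take (Suc k) xs)" using is_walk_take assms by blast
  moreover have "hd (take (Suc k) xs) = u" using assms ne by simp
  moreover have "last (take (Suc k) xs) = xs ! k" using assms by (simp add: last_take_nth_conv)
  ultimately have "dist u (xs!k) \<le> length (take (Suc k) xs) - 1" by (rule dist_le)
  then have d2: "dist u (xs!k) \<le> k" by simp
  have "dist u v \<le> dist u (xs!k) + dist (xs!k) v" using dist_tri assms in1 by blast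
  then show "dist (xs!k) v = dist u v - k" using d1 d2 by linarith
qed

lemma shortest_distinct:
  assumes "is_walk E xs" "hd xs = u" "last xs = v" "length xs = Suc (dist u v)" "u < L" "v < L"
  shows "distinct xs"
proof (subst distinct_conv_nth, intro allI impI)
  fix i j assume ij: "i < length xs" "j < length xs" "i \<noteq> j"
  show "xs!i \<noteq> xs!j"
  proof
    assume "xs!i = xs!j"
    moreover have "dist (xs!i) v = dist u v - i" using shortest(2)[OF assms ij(1)] .
    moreover have "dist (xs!j) v = dist u v - j" using shortest(2)[OF assms ij(2)] .
    ultimately have "dist u v - i = dist u v - j" by simp
    then show False using ij assms(4) by simp
  qed
qed

lemma next_step: "u < L \<Longrightarrow> v < L \<Longrightarrow> dist u v = Suc k \<Longrightarrow> \<exists>w<L. E u w \<and> dist w v = k"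
proof -
  assume a: "u < L" "v < L" "dist u v = Suc k"
  obtain xs where xs: "is_walk E xs" "hd xs = u" "last xs = v" "length xs = Suc (dist u v)"
    using dist_path[OF a(1,2)] by blast
  have "E (xs!0) (xs!1)" using xs a unfolding is_walk_def by auto
  moreover have "xs!0 = u" using xs by (cases xs) auto
  moreover have "1 < length xs" using xs a by simp
  moreover have "xs!1 < L" "dist (xs!1) v = k" using shortest[OF xs a(1,2), of 1] a xs by auto
  ultimately show ?thesis by blast
qed

lemma cycle_lemma:
  assumes eua: "E u a" and eub: "E u b" and ab: "a \<noteq> b"
    and P: "is_walk E P" "distinct P" "hd P = a"
    and Q: "is_walk E Q" "distinct Q" "hd Q = b"
    and lst: "last P = last Q" and uP: "u \<notin> set P" and uQ: "u \<notin> set Q"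
  shows "has_cycle E"
proof -
  have Pne: "P \<noteq> []" and Qne: "Q \<noteq> []" using P Q by (auto simp: is_walk_def)
  have "P!(length P - 1) = last P" using Pne by (simp add: last_conv_nth)
  then have ex: "\<exists>i. i < length P \<and> P!i \<in> set Q"
    using Pne Qne lst by (intro exI[of _ "length P - 1"]) auto
  define i where "i = (LEAST i. i < length P \<and> P!i \<in> set Q)"
  have i: "i < length P" "P!i \<in> set Q" using LeastI_ex[OF ex] unfolding i_def by auto
  have imin: "\<And>i'. i' < i \<Longrightarrow> P!i' \<notin> set Q"
    using not_less_Least i_def i(1) by fastforce
  obtain k where k: "k < length Q" "Q!k = P!i" using i(2) by (auto simp: in_set_conv_nth)
  define A where "A = take (Suc i) P"
  define B where "B = rev (take k Q)"
  have Ane: "A \<noteq> []" using Pne by (simp add: A_def)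
  have lenC: "length (u # A @ B) = Suc (Suc i + k)" using i k by (simp add: A_def B_def)
  have "\<not> (i = 0 \<and> k = 0)"
  proof
    assume "i = 0 \<and> k = 0"
    then have "P!0 = Q!0" using k by simp
    then show False using P Q Pne Qne ab by (simp add: hd_conv_nth)
  qed
  then have len3: "length (u # A @ B) \<ge> 3" unfolding lenC by linarith
  have dA: "distinct A" using P by (simp add: A_def)
  have dB: "distinct B" using Q by (simp add: B_def)
  have uA: "u \<notin> set A" using uP by (auto simp: A_def dest: in_set_takeD)
  have uB: "u \<notin> set B" using uQ by (auto simp: B_def dest: in_set_takeD)
  have disj: "set A \<inter> set B = {}"
  proof (rule ccontr)
    assume "set A \<inter> set B \<noteq> {}"
    then obtain y where y: "y \<in> set A" "y \<in> set B" by blast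
    from y(1) obtain i' where i': "i' < length A" "A!i' = y" by (auto simp: in_set_conv_nth)
    from y(2) obtain k' where k': "k' < k" "Q!k' = y"
      using k by (auto simp: B_def in_set_conv_nth)
    have i'i: "i' \<le> i" "P!i' = y" using i' i by (auto simp: A_def)
    have "y \<in> set Q" using k' k by auto
    have "i' = i"
    proof (rule ccontr)
      assume "i' \<noteq> i" then have "i' < i" using i'i by simp
      then show False using imin \<open>y \<in> set Q\<close> i'i by blast
    qed
    then have "Q!k' = Q!k" using k k' i'i by simp
    moreover have "k' < length Q" using k k' by simp
    ultimately have "k' = k" using nth_eq_iff_index_eq[OF Q(2), of k' k] k by simp
    then show False using k' by simp
  qed
  have dC: "distinct (u # A @ B)" using dA dB uA uB disj by simp
  have wA: "is_walk E A" using is_walk_take P by (simp add: A_def)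
  have hdA: "hd A = a" using P Pne by (simp add: A_def)
  have lastA: "last A = P!i" using i by (simp add: A_def last_take_nth_conv)
  have walk_and_close: "is_walk E (u # A @ B) \<and> E (last (u # A @ B)) (hd (u # A @ B))"
  proof (cases "k = 0")
    case True
    then have "B = []" by (simp add: B_def)
    moreover have "last A = b" using lastA k True Q Qne by (simp add: hd_conv_nth)
    ultimately show ?thesis using wA Ane hdA eua esym[OF eub] by (simp add: is_walk_Cons)
  next
    case False
    have Bne: "B \<noteq> []" using False k Qne by (simp add: B_def)
    have "is_walk E (take k Q)" using is_walk_take Q False by blast
    then have wB: "is_walk E B" unfolding B_def by (rule is_walk_rev[of E, rotated]) (rule esym)
    have "take k Q = take (Suc (k-1)) Q" using False by simp
    then have "last (take k Q) = Q!(k-1)" using last_take_nth_conv[of "k-1" Q] k by simp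
    then have hdB: "hd B = Q!(k - 1)" by (simp add: B_def hd_rev)
    have lastB: "last B = b" using False Q Qne by (simp add: B_def last_rev hd_conv_nth)
    have "Suc (k-1) < length Q" using k False by simp
    then have "E (Q!(k-1)) (Q!Suc (k-1))" using Q(1) unfolding is_walk_def by blast
    then have "E (Q!(k-1)) (Q!k)" using False by simp
    then have "E (Q!k) (Q!(k-1))" by (rule esym)
    then have eAB: "E (last A) (hd B)" using lastA hdB k by simp
    have "is_walk E (A @ B)" using is_walk_append[OF Ane Bne] wA wB eAB by simp
    moreover have "hd (A @ B) = a" using Ane hdA by simp
    ultimately show ?thesis using eua esym[OF eub] lastB Bne Ane by (simp add: is_walk_Cons)
  qed
  have "has_cycle E" unfolding has_cycle_def
    using len3 dC walk_and_close by blast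
  then show ?thesis .
qed

lemma unique_toward:
  assumes "u < L" "j < L" "E u c1" "E u c2" "Suc (dist c1 j) = dist u j" "Suc (dist c2 j) = dist u j"
  shows "c1 = c2"
proof (rule ccontr)
  assume ne: "c1 \<noteq> c2"
  have c: "c1 < L" "c2 < L" using assms ein by auto
  obtain P where P: "is_walk E P" "hd P = c1" "last P = j" "length P = Suc (dist c1 j)"
    using dist_path[OF c(1) assms(2)] by blast
  obtain Q where Q: "is_walk E Q" "hd Q = c2" "last Q = j" "length Q = Suc (dist c2 j)"
    using dist_path[OF c(2) assms(2)] by blast
  have uP: "u \<notin> set P"
  proof
    assume "u \<in> set P"
    then obtain t where t: "t < length P" "P!t = u" by (auto simp: in_set_conv_nth)
    have "dist (P!t) j = dist c1 j - t" using shortest(2)[OF P c(1) assms(2) t(1)] .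
    then have "dist u j = dist c1 j - t" using t by simp
    then show False using assms(5) by linarith
  qed
  have uQ: "u \<notin> set Q"
  proof
    assume "u \<in> set Q"
    then obtain t where t: "t < length Q" "Q!t = u" by (auto simp: in_set_conv_nth)
    have "dist (Q!t) j = dist c2 j - t" using shortest(2)[OF Q c(2) assms(2) t(1)] .
    then have "dist u j = dist c2 j - t" using t by simp
    then show False using assms(6) by linarith
  qed
  have "has_cycle E"
    using cycle_lemma[OF assms(3,4) ne P(1) shortest_distinct[OF P c(1) assms(2)] P(2)
        Q(1) shortest_distinct[OF Q c(2) assms(2)] Q(2)] P(3) Q(3) uP uQ by simp
  then show False using nocyc by simp
qed

lemma parity:
  assumes "E p v" "j < L"
  shows "dist p j \<noteq> dist v j"
proof
  assume eq: "dist p j = dist v j"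
  have pv: "p < L" "v < L" "p \<noteq> v" using ein assms by auto
  show False
  proof (cases "dist p j")
    case 0
    then have "p = j" "v = j" using dist_0 pv eq assms(2) by auto
    then show False using pv by simp
  next
    case (Suc k)
    obtain w where w: "w < L" "E p w" "dist w j = k" using next_step[OF pv(1) assms(2) Suc] by blast
    have vw: "v \<noteq> w" using w eq Suc by auto
    obtain P where P: "is_walk E P" "hd P = v" "last P = j" "length P = Suc (dist v j)"
      using dist_path[OF pv(2) assms(2)] by blast
    obtain Q where Q: "is_walk E Q" "hd Q = w" "last Q = j" "length Q = Suc (dist w j)"
      using dist_path[OF w(1) assms(2)] by blast
    have uP: "p \<notin> set P"
    proof
      assume "p \<in> set P"
      then obtain t where t: "t < length P" "P!t = p" by (auto simp: in_set_conv_nth)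
      have "dist (P!t) j = dist v j - t" using shortest(2)[OF P pv(2) assms(2) t(1)] .
      then have "dist p j = dist v j - t" using t by simp
      then have "t = 0" using eq Suc t P by simp
      then show False using t P pv by (cases P) auto
    qed
    have uQ: "p \<notin> set Q"
    proof
      assume "p \<in> set Q"
      then obtain t where t: "t < length Q" "Q!t = p" by (auto simp: in_set_conv_nth)
      have "dist (Q!t) j = dist w j - t" using shortest(2)[OF Q w(1) assms(2) t(1)] .
      then have "dist p j = dist w j - t" using t by simp
      then show False using Suc w by linarith
    qed
    have "has_cycle E"
      using cycle_lemma[OF assms(1) w(2) vw P(1) shortest_distinct[OF P pv(2) assms(2)] P(2)
          Q(1) shortest_distinct[OF Q w(1) assms(2)] Q(2)] P(3) Q(3) uP uQ by simp
    then show False using nocyc by simp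
  qed
qed

lemma edge_dist: "E p v \<Longrightarrow> j < L \<Longrightarrow> dist v j = Suc (dist p j) \<or> dist p j = Suc (dist v j)"
proof -
  assume a: "E p v" "j < L"
  have pv: "p < L" "v < L" using ein a by auto
  have "dist v j \<le> dist v p + dist p j" using dist_tri pv a by blast
  moreover have "dist p j \<le> dist p v + dist v j" using dist_tri pv a by blast
  moreover have "dist p v = 1" "dist v p = 1" using dist_edge[OF a(1)] dist_edge[OF esym[OF a(1)]] by auto
  moreover have "dist p j \<noteq> dist v j" using parity a by blast
  ultimately show ?thesis by linarith
qed

end



locale gt = tr +
  fixes r h :: nat
  assumes rL: "r < L" and rdeg: "2 \<le> degree L E r"
    and leafh: "\<forall>v. is_leaf L E v \<longrightarrow> tree_dist E r v = h"
    and deg3: "\<forall>v<L. v \<noteq> r \<and> \<not> is_leaf L E v \<longrightarrow> 3 \<le> degree L E v"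
begin

definition dep where "dep v = dist r v"
definition par where "par v = (SOME p. p < L \<and> E v p \<and> Suc (dep p) = dep v)"
definition children where "children v = filter (\<lambda>c. E v c \<and> dep c = Suc (dep v)) [0..<L]"

lemma dep_r[simp]: "dep r = 0" by (simp add: dep_def)

lemma dep_edge: "E u v \<Longrightarrow> dep v = Suc (dep u) \<or> dep u = Suc (dep v)"
proof -
  assume e: "E u v"
  have uv: "u < L" "v < L" using ein e by auto
  have "dist v r = Suc (dist u r) \<or> dist u r = Suc (dist v r)" using edge_dist[OF e rL] .
  then show ?thesis using dist_sym[OF uv(1) rL] dist_sym[OF uv(2) rL] by (simp add: dep_def)
qed

lemma par_ex: "v < L \<Longrightarrow> v \<noteq> r \<Longrightarrow> par v < L \<and> E v (par v) \<and> Suc (dep (par v)) = dep v"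
proof -
  assume v: "v < L" "v \<noteq> r"
  have "dist v r \<noteq> 0" using dist_0[OF v(1) rL] v by auto
  then obtain k where k: "dist v r = Suc k" by (cases "dist v r") auto
  obtain w where w: "w < L" "E v w" "dist w r = k" using next_step[OF v(1) rL k] by blast
  have "Suc (dep w) = dep v" using w k dist_sym[OF w(1) rL] dist_sym[OF v(1) rL] by (simp add: dep_def)
  then have "\<exists>p. p < L \<and> E v p \<and> Suc (dep p) = dep v" using w by blast
  then show ?thesis unfolding par_def by (rule someI_ex)
qed

lemma par_unique: "v < L \<Longrightarrow> E v p \<Longrightarrow> Suc (dep p) = dep v \<Longrightarrow> p = par v"
proof -
  assume a: "v < L" "E v p" "Suc (dep p) = dep v"
  have vr: "v \<noteq> r" using a(3) by auto
  have pp: "par v < L" "E v (par v)" "Suc (dep (par v)) = dep v" using par_ex[OF a(1) vr] by auto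
  have pL: "p < L" using ein a by auto
  show ?thesis
  proof (rule unique_toward[OF a(1) rL a(2) pp(2)])
    show "Suc (dist p r) = dist v r" using a(3) dist_sym[OF pL rL] dist_sym[OF a(1) rL] by (simp add: dep_def)
    show "Suc (dist (par v) r) = dist v r" using pp dist_sym[OF pp(1) rL] dist_sym[OF a(1) rL] by (simp add: dep_def)
  qed
qed

lemma dep_le: "v < L \<Longrightarrow> j < L \<Longrightarrow> dep j \<le> dep v + dist v j"
  unfolding dep_def using dist_tri[OF rL] by blast

lemma sub_i:
  assumes "E p v" "Suc (dep p) = dep v" "j < L" "dep j = dep v + dist v j"
  shows "dist p j = Suc (dist v j)"
proof -
  have pv: "p < L" "v < L" using ein assms by auto
  have "dist v j = Suc (dist p j) \<or> dist p j = Suc (dist v j)" using edge_dist[OF assms(1,3)] .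
  moreover have "dep j \<le> dep p + dist p j" using dep_le[OF pv(1) assms(3)] .
  ultimately show ?thesis using assms by linarith
qed

lemma sub_ii_aux:
  "j < L \<Longrightarrow> \<forall>p v. E p v \<longrightarrow> Suc (dep p) = dep v \<longrightarrow> dist v j = k \<longrightarrow> dist p j = Suc k
     \<longrightarrow> dep j = dep v + k"
proof (induction k)
  case 0
  show ?case
  proof (intro allI impI)
    fix p v assume a: "E p v" "Suc (dep p) = dep v" "dist v j = 0" "dist p j = Suc 0"
    have "v < L" using ein a by auto
    then have "v = j" using dist_0 a 0 by auto
    then show "dep j = dep v + 0" by simp
  qed
next
  case (Suc k)
  show ?case
  proof (intro allI impI)
    fix p v assume a: "E p v" "Suc (dep p) = dep v" "dist v j = Suc k" "dist p j = Suc (Suc k)"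
    have vL: "v < L" using ein a by auto
    obtain w where w: "w < L" "E v w" "dist w j = k" using next_step[OF vL Suc.prems a(3)] by blast
    have "dep w = Suc (dep v) \<or> dep v = Suc (dep w)" using dep_edge[OF w(2)] .
    moreover have "dep v \<noteq> Suc (dep w)"
    proof
      assume "dep v = Suc (dep w)"
      then have "w = par v" using par_unique[OF vL w(2)] by simp
      moreover have "p = par v" using par_unique[OF vL esym[OF a(1)] a(2)] .
      ultimately have "w = p" by simp
      then show False using w a by simp
    qed
    ultimately have dw: "dep w = Suc (dep v)" by simp
    have "dep j = dep w + k" using Suc.IH[OF Suc.prems] w(2) dw[symmetric] w(3) a(3) by blast
    then show "dep j = dep v + Suc k" using dw by simp
  qed
qed

lemma sub_ii:
  assumes "E p v" "Suc (dep p) = dep v" "j < L" "dist p j = Suc (dist v j)"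
  shows "dep j = dep v + dist v j"
  using sub_ii_aux[OF assms(3)] assms by blast

definition Dset where "Dset k v = {j. j < L \<and> dist v j = k \<and> dep j = dep v + k}"
definition Uset where "Uset d v = {j. j < L \<and> dist v j = d}"

lemma Dset0: "v < L \<Longrightarrow> Dset 0 v = {v}"
  unfolding Dset_def using dist_0 by auto

lemma children_set: "c \<in> set (children v) \<longleftrightarrow> c < L \<and> E v c \<and> dep c = Suc (dep v)"
  by (auto simp: children_def)

lemma Dset_Suc: "v < L \<Longrightarrow> Dset (Suc k) v = (\<Union>c\<in>set (children v). Dset k c)"
proof (intro equalityI subsetI)
  fix j assume v: "v < L" and j: "j \<in> Dset (Suc k) v"
  then have j1: "j < L" "dist v j = Suc k" "dep j = dep v + Suc k" by (auto simp: Dset_def)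
  obtain w where w: "w < L" "E v w" "dist w j = k" using next_step[OF v j1(1,2)] by blast
  have "dep j \<le> dep w + k" using dep_le[OF w(1) j1(1)] w by simp
  moreover have "dep w = Suc (dep v) \<or> dep v = Suc (dep w)" using dep_edge[OF w(2)] .
  ultimately have dw: "dep w = Suc (dep v)" using j1 by linarith
  then have "w \<in> set (children v)" using w by (simp add: children_set)
  moreover have "j \<in> Dset k w" using j1 w dw by (simp add: Dset_def)
  ultimately show "j \<in> (\<Union>c\<in>set (children v). Dset k c)" by blast
next
  fix j assume v: "v < L" and j: "j \<in> (\<Union>c\<in>set (children v). Dset k c)"
  then obtain c where c: "c < L" "E v c" "dep c = Suc (dep v)" "j < L" "dist c j = k" "dep j = dep c + k"
    by (auto simp: Dset_def children_set)
  have "dist v j \<le> dist v c + dist c j" using dist_tri[OF v c(1) c(4)] .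
  moreover have "dist v c = 1" using dist_edge[OF c(2)] .
  moreover have "dep j \<le> dep v + dist v j" using dep_le[OF v c(4)] .
  ultimately have "dist v j = Suc k" using c by linarith
  then show "j \<in> Dset (Suc k) v" using c by (simp add: Dset_def)
qed

lemma Dset_disj: "v < L \<Longrightarrow> c1 \<in> set (children v) \<Longrightarrow> c2 \<in> set (children v) \<Longrightarrow> c1 \<noteq> c2 \<Longrightarrow>
  Dset k c1 \<inter> Dset k c2 = {}"
proof (rule ccontr)
  assume a: "v < L" "c1 \<in> set (children v)" "c2 \<in> set (children v)" "c1 \<noteq> c2"
    "Dset k c1 \<inter> Dset k c2 \<noteq> {}"
  then obtain j where j: "j \<in> Dset k c1" "j \<in> Dset k c2" by blast
  have "j \<in> Dset (Suc k) v" using Dset_Suc[OF a(1)] j a(2) by blast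
  then have dj: "dist v j = Suc k" "j < L" by (auto simp: Dset_def)
  have "c1 = c2"
    using unique_toward[OF a(1) dj(2), of c1 c2] a(2,3) j dj by (auto simp: children_set Dset_def)
  then show False using a by simp
qed

lemma children_disj: "v1 < L \<Longrightarrow> v2 < L \<Longrightarrow> c \<in> set (children v1) \<Longrightarrow> c \<in> set (children v2) \<Longrightarrow> v1 = v2"
proof -
  assume a: "v1 < L" "v2 < L" "c \<in> set (children v1)" "c \<in> set (children v2)"
  then have c: "c < L" "E v1 c" "E v2 c" "dep c = Suc (dep v1)" "dep c = Suc (dep v2)"
    by (auto simp: children_set)
  have "v1 = par c" using par_unique[OF c(1) esym[OF c(2)]] c by simp
  moreover have "v2 = par c" using par_unique[OF c(1) esym[OF c(3)]] c by simp
  ultimately show ?thesis by simp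
qed

end



context gt begin

definition Dsum :: "(nat \<Rightarrow> real) \<Rightarrow> nat \<Rightarrow> nat \<Rightarrow> real" where "Dsum x k v = sum x (Dset k v)"
definition Usum :: "(nat \<Rightarrow> real) \<Rightarrow> nat \<Rightarrow> nat \<Rightarrow> real" where "Usum x d v = sum x (Uset d v)"

lemma fin_D[simp]: "finite (Dset k v)"
  by (rule finite_subset[of _ "{..<L}"]) (auto simp: Dset_def)
lemma fin_U[simp]: "finite (Uset k v)"
  by (rule finite_subset[of _ "{..<L}"]) (auto simp: Uset_def)

lemma Usum_root: "Usum x d r = Dsum x d r"
proof -
  have "Uset d r = Dset d r" by (auto simp: Uset_def Dset_def dep_def)
  then show ?thesis by (simp add: Usum_def Dsum_def)
qed

lemma Dsum0: "v < L \<Longrightarrow> Dsum x 0 v = x v" by (simp add: Dsum_def Dset0)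

lemma Usum0: "v < L \<Longrightarrow> Usum x 0 v = x v"
proof -
  assume v: "v < L"
  have "Uset 0 v = {v}" using dist_0 v by (auto simp: Uset_def)
  then show ?thesis by (simp add: Usum_def)
qed

lemma Dsum_Suc: "v < L \<Longrightarrow> Dsum x (Suc k) v = sum_list (map (\<lambda>c. Dsum x k c) (children v))"
proof -
  assume v: "v < L"
  have dc: "distinct (children v)" by (simp add: children_def)
  have "sum_list (map (\<lambda>c. Dsum x k c) (children v)) = (\<Sum>c\<in>set (children v). Dsum x k c)"
    using dc by (simp add: sum_list_distinct_conv_sum_set)
  also have "\<dots> = sum x (\<Union>c\<in>set (children v). Dset k c)"
    unfolding Dsum_def
  proof (rule sum.UNION_disjoint[symmetric])
    show "\<forall>i\<in>set (children v). \<forall>j\<in>set (children v). i \<noteq> j \<longrightarrow> Dset k i \<inter> Dset k j = {}"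
      using Dset_disj[OF v] by blast
  qed auto
  also have "\<dots> = Dsum x (Suc k) v" using Dset_Suc[OF v] by (simp add: Dsum_def)
  finally show ?thesis by simp
qed

lemma U_rec:
  assumes v: "v < L" "v \<noteq> r" and d: "1 \<le> d"
  shows "Usum x d v = Dsum x d v + Usum x (d - 1) (par v) - (if 2 \<le> d then Dsum x (d - 2) v else 0)"
proof -
  define p where "p = par v"
  have pp: "p < L" "E v p" "Suc (dep p) = dep v" using par_ex[OF v] by (auto simp: p_def)
  have epv: "E p v" using esym[OF pp(2)] .
  define B where "B = {j. j < L \<and> dist v j = d \<and> dep j \<noteq> dep v + d}"
  define C where "C = {j. j < L \<and> dist p j = d - 1 \<and> dep j = dep v + dist v j}"
  have U1: "Uset d v = Dset d v \<union> B" by (auto simp: Uset_def Dset_def B_def)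
  have U1d: "Dset d v \<inter> B = {}" by (auto simp: Dset_def B_def)
  have BC: "B = {j. j < L \<and> dist p j = d - 1 \<and> dep j \<noteq> dep v + dist v j}"
  proof (intro equalityI subsetI)
    fix j assume "j \<in> B"
    then have j: "j < L" "dist v j = d" "dep j \<noteq> dep v + d" by (auto simp: B_def)
    have "dist v j = Suc (dist p j) \<or> dist p j = Suc (dist v j)" using edge_dist[OF epv j(1)] .
    moreover have "dist p j \<noteq> Suc (dist v j)" using sub_ii[OF epv pp(3) j(1)] j by auto
    ultimately show "j \<in> {j. j < L \<and> dist p j = d - 1 \<and> dep j \<noteq> dep v + dist v j}" using j by auto
  next
    fix j assume "j \<in> {j. j < L \<and> dist p j = d - 1 \<and> dep j \<noteq> dep v + dist v j}"
    then have j: "j < L" "dist p j = d - 1" "dep j \<noteq> dep v + dist v j" by auto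
    have "dist v j = Suc (dist p j) \<or> dist p j = Suc (dist v j)" using edge_dist[OF epv j(1)] .
    moreover have "dist p j \<noteq> Suc (dist v j)" using sub_ii[OF epv pp(3) j(1)] j by auto
    ultimately have "dist v j = d" using j d by auto
    then show "j \<in> B" using j by (auto simp: B_def)
  qed
  have U2: "Uset (d - 1) p = B \<union> C" using BC by (auto simp: Uset_def C_def)
  have U2d: "B \<inter> C = {}" using BC by (auto simp: C_def)
  have CD: "C = (if 2 \<le> d then Dset (d - 2) v else {})"
  proof (intro equalityI subsetI)
    fix j assume "j \<in> C"
    then have j: "j < L" "dist p j = d - 1" "dep j = dep v + dist v j" by (auto simp: C_def)
    have "dist p j = Suc (dist v j)" using sub_i[OF epv pp(3) j(1) j(3)] .
    then show "j \<in> (if 2 \<le> d then Dset (d - 2) v else {})" using j by (auto simp: Dset_def)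
  next
    fix j assume a: "j \<in> (if 2 \<le> d then Dset (d - 2) v else {})"
    then have d2: "2 \<le> d" by (cases "2 \<le> d") auto
    then have j: "j < L" "dist v j = d - 2" "dep j = dep v + (d - 2)" using a by (auto simp: Dset_def)
    have "dist p j = Suc (dist v j)" using sub_i[OF epv pp(3) j(1)] j by simp
    then show "j \<in> C" using j d2 by (auto simp: C_def)
  qed
  have finB: "finite B" by (rule finite_subset[of _ "{..<L}"]) (auto simp: B_def)
  have finC: "finite C" by (rule finite_subset[of _ "{..<L}"]) (auto simp: C_def)
  have s1: "Usum x d v = Dsum x d v + sum x B"
    unfolding Usum_def Dsum_def U1 by (rule sum.union_disjoint) (auto simp: finB U1d)
  have s2: "Usum x (d - 1) p = sum x B + sum x C"
    unfolding Usum_def U2 by (rule sum.union_disjoint) (auto simp: finB finC U2d)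
  have s3: "sum x C = (if 2 \<le> d then Dsum x (d - 2) v else 0)"
    using CD by (simp add: Dsum_def)
  show ?thesis using s1 s2 s3 by (simp add: p_def)
qed

end



lemma two_pow: "2 * n \<le> (2::nat) ^ n"
proof (induction n)
  case 0 then show ?case by simp
next
  case (Suc n)
  have "n = 0 \<or> 2 \<le> (2::nat) ^ n"
  proof (cases n)
    case (Suc m) then have "2 * 1 \<le> (2::nat) * 2 ^ m" by simp
    then show ?thesis using Suc by simp
  qed simp
  then show ?case using Suc.IH by auto
qed

context gt begin

definition H where "H = Max (dep ` {..<L})"

lemma dep_le_H: "v < L \<Longrightarrow> dep v \<le> H"
  unfolding H_def by (rule Max_ge) auto

lemma H_att: "\<exists>vm<L. dep vm = H"
proof -
  have "H \<in> dep ` {..<L}" unfolding H_def by (rule Max_in) (use rL in auto)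
  then show ?thesis by auto
qed

lemma nbr_r: "E r w \<Longrightarrow> w \<in> set (children r)"
proof -
  assume e: "E r w"
  have "dep w = Suc (dep r) \<or> dep r = Suc (dep w)" using dep_edge[OF e] .
  then show ?thesis using e ein[OF e] by (auto simp: children_set)
qed

lemma nbr_nonroot: "u < L \<Longrightarrow> u \<noteq> r \<Longrightarrow> E u w \<Longrightarrow> w \<in> insert (par u) (set (children u))"
proof -
  assume a: "u < L" "u \<noteq> r" "E u w"
  have "dep w = Suc (dep u) \<or> dep u = Suc (dep w)" using dep_edge[OF a(3)] .
  then show ?thesis
  proof
    assume "dep w = Suc (dep u)" then show ?thesis using a ein[OF a(3)] by (auto simp: children_set)
  next
    assume "dep u = Suc (dep w)" then have "w = par u" using par_unique[OF a(1) a(3)] by simp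
    then show ?thesis by simp
  qed
qed

lemma nochild_leaf: "u < L \<Longrightarrow> u \<noteq> r \<Longrightarrow> set (children u) = {} \<Longrightarrow> is_leaf L E u"
proof -
  assume a: "u < L" "u \<noteq> r" "set (children u) = {}"
  have "{w. w < L \<and> E u w} = {par u}"
    using nbr_nonroot[OF a(1,2)] a(3) par_ex[OF a(1,2)] by auto
  then show ?thesis using a by (simp add: is_leaf_def degree_def)
qed

lemma hH: "h = H \<and> 1 \<le> H"
proof -
  obtain vm where vm: "vm < L" "dep vm = H" using H_att by blast
  have nc: "set (children vm) = {}"
  proof (rule ccontr)
    assume "set (children vm) \<noteq> {}"
    then obtain c where "c \<in> set (children vm)" using ex_in_conv by metis
    then have "c < L" "dep c = Suc H" using vm by (auto simp: children_set)
    then show False using dep_le_H by fastforce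
  qed
  have vmr: "vm \<noteq> r"
  proof
    assume "vm = r"
    then have e: "{w. w < L \<and> E r w} = {}" using nc nbr_r by auto
    have "degree L E r = card {w. w < L \<and> E r w}" by (simp add: degree_def)
    also have "\<dots> = 0" unfolding e by simp
    finally show False using rdeg by simp
  qed
  have "is_leaf L E vm" using nochild_leaf[OF vm(1) vmr nc] .
  then have "h = H" using leafh vm by (simp add: dep_def)
  moreover have "H \<noteq> 0" using vm vmr dist_0[OF rL vm(1)] by (auto simp: dep_def)
  ultimately show ?thesis by simp
qed

lemma two_children: "u < L \<Longrightarrow> dep u < H \<Longrightarrow> 2 \<le> card (set (children u))"
proof -
  assume a: "u < L" "dep u < H"
  show ?thesis
  proof (cases "u = r")
    case True
    have "{w. w < L \<and> E r w} \<subseteq> set (children r)" using nbr_r by auto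
    then have "card {w. w < L \<and> E r w} \<le> card (set (children r))" by (rule card_mono[rotated]) simp
    then show ?thesis using rdeg True by (simp add: degree_def)
  next
    case False
    have "\<not> is_leaf L E u" using leafh hH a by (auto simp: dep_def)
    then have d3: "3 \<le> degree L E u" using deg3 a False by blast
    have "{w. w < L \<and> E u w} \<subseteq> insert (par u) (set (children u))" using nbr_nonroot[OF a(1) False] by auto
    then have "card {w. w < L \<and> E u w} \<le> card (insert (par u) (set (children u)))" by (rule card_mono[rotated]) simp
    also have "\<dots> \<le> Suc (card (set (children u)))" by (rule card_insert_le_m1) auto
    finally show ?thesis using d3 by (simp add: degree_def)
  qed
qed

definition Lv where "Lv t = {u. u < L \<and> dep u = t}"

lemma finLv[simp]: "finite (Lv t)" by (rule finite_subset[of _ "{..<L}"]) (auto simp: Lv_def)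

lemma growth: "t < H \<Longrightarrow> 2 * card (Lv t) \<le> card (Lv (Suc t))"
proof -
  assume t: "t < H"
  have sub: "(\<Union>u\<in>Lv t. set (children u)) \<subseteq> Lv (Suc t)" by (auto simp: Lv_def children_set)
  have "card (\<Union>u\<in>Lv t. set (children u)) = (\<Sum>u\<in>Lv t. card (set (children u)))"
  proof (rule card_UN_disjoint)
    show "\<forall>i\<in>Lv t. \<forall>j\<in>Lv t. i \<noteq> j \<longrightarrow> set (children i) \<inter> set (children j) = {}"
      using children_disj by (auto simp: Lv_def)
  qed auto
  moreover have "(\<Sum>u\<in>Lv t. card (set (children u))) \<ge> (\<Sum>u\<in>Lv t. 2)"
    by (rule sum_mono) (use two_children t in \<open>auto simp: Lv_def\<close>)
  moreover have "card (\<Union>u\<in>Lv t. set (children u)) \<le> card (Lv (Suc t))" by (rule card_mono[OF _ sub]) simp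
  ultimately show ?thesis by simp
qed

lemma Lv0: "Lv 0 = {r}"
  using dist_0[OF rL] rL by (auto simp: Lv_def dep_def)

lemma pow_Lv: "t \<le> H \<Longrightarrow> 2 ^ t \<le> card (Lv t)"
proof (induction t)
  case 0 then show ?case by (simp add: Lv0)
next
  case (Suc t)
  then have "2 ^ t \<le> card (Lv t)" by simp
  moreover have "2 * card (Lv t) \<le> card (Lv (Suc t))" using growth Suc.prems by simp
  ultimately show ?case by simp
qed

lemma L_bound: "2 ^ H + 1 \<le> L"
proof -
  have "Lv 0 \<inter> Lv H = {}" using hH by (auto simp: Lv_def)
  then have "card (Lv 0 \<union> Lv H) = card (Lv 0) + card (Lv H)" by (simp add: card_Un_disjoint)
  moreover have "card (Lv 0 \<union> Lv H) \<le> card {..<L}" by (rule card_mono) (auto simp: Lv_def)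
  moreover have "2 ^ H \<le> card (Lv H)" using pow_Lv by simp
  ultimately show ?thesis by (simp add: Lv0)
qed

lemma dist_bound: "v < L \<Longrightarrow> j < L \<Longrightarrow> dist v j \<le> 2 * H"
proof -
  assume a: "v < L" "j < L"
  have "dist v j \<le> dist v r + dist r j" using dist_tri[OF a(1) rL a(2)] .
  moreover have "dist v r = dep v" using dist_sym[OF a(1) rL] by (simp add: dep_def)
  moreover have "dist r j = dep j" by (simp add: dep_def)
  ultimately show ?thesis using dep_le_H[OF a(1)] dep_le_H[OF a(2)] by linarith
qed

lemma children_total: "(\<Sum>v<L. length (children v)) \<le> L"
proof -
  have "(\<Sum>v<L. length (children v)) = (\<Sum>v<L. card (set (children v)))"
    by (rule sum.cong) (auto simp: children_def distinct_card[symmetric])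
  also have "\<dots> = card (\<Union>v<L. set (children v))"
  proof (rule card_UN_disjoint[symmetric])
    show "\<forall>i\<in>{..<L}. \<forall>j\<in>{..<L}. i \<noteq> j \<longrightarrow> set (children i) \<inter> set (children j) = {}"
      using children_disj by auto
  qed auto
  also have "\<dots> \<le> card {..<L}" by (rule card_mono) (auto simp: children_set)
  finally show ?thesis by simp
qed

end



lemma sum_lessThan_plus: "(\<Sum>i<m+n. g i) = (\<Sum>i<m. g i) + (\<Sum>i<n. g (m+i))" for g :: "nat \<Rightarrow> nat"
  by (induction n) (simp_all add: add.assoc)

lemma sum_blocks: "(\<Sum>i<N*L. g i) = (\<Sum>k<N. \<Sum>v<L. g (k*L+v))" for g :: "nat \<Rightarrow> nat"
proof (induction N)
  case 0 then show ?case by simp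
next
  case (Suc N)
  have "(\<Sum>i<Suc N*L. g i) = (\<Sum>i<N*L + L. g i)" by (simp add: add.commute)
  also have "\<dots> = (\<Sum>i<N*L. g i) + (\<Sum>v<L. g (N*L+v))" by (rule sum_lessThan_plus)
  finally show ?case using Suc by simp
qed

lemma idx_lt: "k < N \<Longrightarrow> v < L \<Longrightarrow> k*L + v < N*(L::nat)"
proof -
  assume a: "k < N" "v < L"
  have "Suc k * L \<le> N * L" using a by (intro mult_le_mono1) simp
  then show ?thesis using a by simp
qed

lemma idx_div: "v < L \<Longrightarrow> (k*L + v) div L = (k::nat)" by simp
lemma idx_mod: "v < L \<Longrightarrow> (k*L + v) mod L = (v::nat)" by simp

context gt begin

definition N where "N = 2 * H + 1"

lemma N_le: "N \<le> L"
  using two_pow[of H] L_bound by (simp add: N_def)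

lemma Lpos: "0 < L" using rL by simp

definition DI where "DI k v = 2*L + k*L + v"
definition UI where "UI d v = 2*L + N*L + d*L + v"

definition Dexp where "Dexp k v = (if k = 0 then VLin [L+v] [] else VLin (map (\<lambda>c. DI (k-1) c) (children v)) [])"
definition Uexp where "Uexp d v = (if d = 0 then VLin [DI 0 v] [] else if v = r then VLin [DI d r] []
   else VLin [DI d v, UI (d-1) (par v)] (if 2 \<le> d then [DI (d-2) v] else []))"
definition Oexp where "Oexp v = VDot (map (\<lambda>d. (d, UI d v)) [0..<N])"
definition defn where "defn i = (if i < N*L then Dexp (i div L) (i mod L)
   else if i < 2*N*L then Uexp ((i - N*L) div L) ((i - N*L) mod L) else Oexp (i - 2*N*L))"
definition es where "es = map defn [0..<2*N*L + L]"

definition Ssem where "Ssem f x i = (if i < N*L then Dsum x (i div L) (i mod L)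
   else if i < 2*N*L then Usum x ((i - N*L) div L) ((i - N*L) mod L)
   else (\<Sum>j<L. f (dist (i - 2*N*L) j) * x j))"
definition S where "S f x t = (if t < L then f t else if t < 2*L then x (t - L) else Ssem f x (t - 2*L))"

lemma SD: "k < N \<Longrightarrow> v < L \<Longrightarrow> S f x (DI k v) = Dsum x k v"
  using idx_lt[of k N v L] by (simp add: S_def DI_def Ssem_def)

lemma SU: "d < N \<Longrightarrow> v < L \<Longrightarrow> S f x (UI d v) = Usum x d v"
proof -
  assume a: "d < N" "v < L"
  have "d*L + v < N*L" using idx_lt a by blast
  moreover then have "d*L + v < L*N" by (simp add: mult.commute)
  ultimately show ?thesis using a by (simp add: S_def UI_def Ssem_def)
qed

lemma SO: "v < L \<Longrightarrow> S f x (2*L + 2*N*L + v) = (\<Sum>j<L. f (dist v j) * x j)"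
  by (simp add: S_def Ssem_def)

lemma LD: "k < N \<Longrightarrow> v < L \<Longrightarrow> (\<forall>t\<in>refs (Dexp k v). t < DI k v) \<and> evalv (S f x) (Dexp k v) = Dsum x k v"
proof -
  assume a: "k < N" "v < L"
  show ?thesis
  proof (cases k)
    case 0
    then show ?thesis using a by (simp add: Dexp_def DI_def S_def Dsum0)
  next
    case (Suc k')
    have r1: "\<forall>t\<in>refs (Dexp k v). t < DI k v"
      using Suc by (auto simp: Dexp_def DI_def children_set)
    have "sum_list (map (\<lambda>c. S f x (DI k' c)) (children v)) = sum_list (map (\<lambda>c. Dsum x k' c) (children v))"
      by (rule arg_cong[where f=sum_list], rule map_cong[OF refl]) (use SD Suc a in \<open>auto simp: children_set\<close>)
    then have "evalv (S f x) (Dexp k v) = sum_list (map (\<lambda>c. Dsum x k' c) (children v))"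
      using Suc by (simp add: Dexp_def comp_def)
    also have "\<dots> = Dsum x k v" using Dsum_Suc a Suc by simp
    finally show ?thesis using r1 by simp
  qed
qed

lemma LU: "d < N \<Longrightarrow> v < L \<Longrightarrow> (\<forall>t\<in>refs (Uexp d v). t < UI d v) \<and> evalv (S f x) (Uexp d v) = Usum x d v"
proof -
  assume a: "d < N" "v < L"
  have NL: "1 \<le> N*L" using a by simp
  show ?thesis
  proof (cases "d = 0")
    case True
    then show ?thesis using a NL SD[of 0 v] by (simp add: Uexp_def DI_def UI_def Dsum0 Usum0)
  next
    case d0: False
    show ?thesis
    proof (cases "v = r")
      case True
      then show ?thesis using a d0 SD[of d r] by (simp add: Uexp_def DI_def UI_def Usum_root)
    next
      case False
      have pp: "par v < L" using par_ex[OF a(2) False] by simp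
      have r1: "\<forall>t\<in>refs (Uexp d v). t < UI d v"
      proof
        fix t assume "t \<in> refs (Uexp d v)"
        then have "t = DI d v \<or> t = UI (d-1) (par v) \<or> (2 \<le> d \<and> t = DI (d-2) v)"
          using d0 False by (auto simp: Uexp_def split: if_splits)
        moreover have "DI d v < UI d v" using NL by (auto simp: DI_def UI_def)
        moreover have "DI (d-2) v < UI d v"
        proof -
          have m: "(d-2)*L \<le> d*L" by (rule mult_le_mono1) simp
          show ?thesis unfolding DI_def UI_def using m NL by linarith
        qed
        moreover have "UI (d-1) (par v) < UI d v"
        proof -
          have "(d-1)*L + par v < (d-1)*L + L" using pp by simp
          also have "\<dots> = d*L" using d0 by (cases d) auto
          finally show ?thesis by (simp add: UI_def)
        qed
        ultimately show "t < UI d v" by auto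
      qed
      have "evalv (S f x) (Uexp d v) = Dsum x d v + Usum x (d-1) (par v) - (if 2 \<le> d then Dsum x (d-2) v else 0)"
        using d0 False a pp SD[of d v] SD[of "d-2" v] SU[of "d-1" "par v"] by (simp add: Uexp_def)
      also have "\<dots> = Usum x d v" using U_rec[OF a(2) False, of d x] d0 by simp
      finally show ?thesis using r1 by simp
    qed
  qed
qed

lemma out_sum: "v < L \<Longrightarrow> (\<Sum>d<N. f d * Usum x d v) = (\<Sum>j<L. f (dist v j) * x j)"
proof -
  assume v: "v < L"
  have "(\<Sum>d<N. f d * Usum x d v) = (\<Sum>d<N. \<Sum>j<L. if dist v j = d then f d * x j else 0)"
  proof (rule sum.cong[OF refl])
    fix d
    have "Uset d v = {j \<in> {..<L}. dist v j = d}" by (auto simp: Uset_def)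
    then have "Usum x d v = (\<Sum>j<L. if dist v j = d then x j else 0)"
      unfolding Usum_def by (simp only:) (rule sum.inter_filter, simp)
    then have "f d * Usum x d v = (\<Sum>j<L. f d * (if dist v j = d then x j else 0))"
      by (simp add: sum_distrib_left)
    also have "\<dots> = (\<Sum>j<L. if dist v j = d then f d * x j else 0)" by (rule sum.cong) auto
    finally show "f d * Usum x d v = (\<Sum>j<L. if dist v j = d then f d * x j else 0)" .
  qed
  also have "\<dots> = (\<Sum>j<L. \<Sum>d<N. if dist v j = d then f d * x j else 0)" by (rule sum.swap)
  also have "\<dots> = (\<Sum>j<L. f (dist v j) * x j)"
  proof (rule sum.cong[OF refl])
    fix j assume "j \<in> {..<L}"
    then have "dist v j < N" using dist_bound[OF v] by (simp add: N_def le_imp_less_Suc)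
    then show "(\<Sum>d<N. if dist v j = d then f d * x j else 0) = f (dist v j) * x j"
      by (simp add: sum.delta)
  qed
  finally show ?thesis .
qed

lemma LO: "v < L \<Longrightarrow> (\<forall>t\<in>refs (Oexp v). t < 2*L + 2*N*L + v) \<and>
   evalv (S f x) (Oexp v) = (\<Sum>j<L. f (dist v j) * x j)"
proof -
  assume v: "v < L"
  have r1: "\<forall>t\<in>refs (Oexp v). t < 2*L + 2*N*L + v"
  proof
    fix t assume "t \<in> refs (Oexp v)"
    then obtain d where d: "d < N" "t = d \<or> t = UI d v" by (auto simp: Oexp_def)
    have "d*L + v < N*L" using idx_lt d v by blast
    then have "UI d v < 2*L + 2*N*L + v" using d(1) Lpos by (simp add: UI_def)
    moreover have "d < 2*L + 2*N*L + v" using d N_le by simp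
    ultimately show "t < 2*L + 2*N*L + v" using d by auto
  qed
  have "evalv (S f x) (Oexp v) = sum_list (map (\<lambda>d. S f x d * S f x (UI d v)) [0..<N])"
    by (simp add: Oexp_def comp_def)
  also have "\<dots> = (\<Sum>d<N. S f x d * S f x (UI d v))"
    by (simp add: sum_list_distinct_conv_sum_set atLeast0LessThan)
  also have "\<dots> = (\<Sum>d<N. f d * Usum x d v)"
  proof (rule sum.cong[OF refl])
    fix d assume "d \<in> {..<N}"
    then have "d < N" "d < L" using N_le by auto
    then show "S f x d * S f x (UI d v) = f d * Usum x d v" using SU v by (simp add: S_def)
  qed
  also have "\<dots> = (\<Sum>j<L. f (dist v j) * x j)" using out_sum v by simp
  finally show ?thesis using r1 by simp
qed

lemma Lall: "i < 2*N*L + L \<Longrightarrow> (\<forall>t\<in>refs (defn i). t < 2*L + i) \<and> evalv (S f x) (defn i) = S f x (2*L + i)"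
proof -
  assume i: "i < 2*N*L + L"
  show ?thesis
  proof (cases "i < N*L")
    case True
    define k where "k = i div L"
    define v where "v = i mod L"
    have kv: "k < N" "v < L" "i = k*L + v" using True Lpos
      by (auto simp: k_def v_def less_mult_imp_div_less)
    have "defn i = Dexp k v" using True by (simp add: defn_def k_def v_def)
    moreover have "2*L + i = DI k v" using kv by (simp add: DI_def)
    moreover have "S f x (DI k v) = Dsum x k v" using SD kv by simp
    ultimately show ?thesis using LD[OF kv(1,2)] by simp
  next
    case F1: False
    show ?thesis
    proof (cases "i < 2*N*L")
      case True
      define d where "d = (i - N*L) div L"
      define v where "v = (i - N*L) mod L"
      have "i - N*L < N*L" using True F1 by simp
      then have kv: "d < N" "v < L" "i - N*L = d*L + v" using Lpos
        by (auto simp: d_def v_def less_mult_imp_div_less)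
      have "defn i = Uexp d v" using True F1 by (simp add: defn_def d_def v_def)
      moreover have "2*L + i = UI d v" using kv F1 by (simp add: UI_def)
      moreover have "S f x (UI d v) = Usum x d v" using SU kv by simp
      ultimately show ?thesis using LU[OF kv(1,2)] by simp
    next
      case False
      define v where "v = i - 2*N*L"
      have v: "v < L" "i = 2*N*L + v" using i False by (auto simp: v_def)
      have "defn i = Oexp v" using False F1 by (simp add: defn_def v_def)
      moreover have "S f x (2*L + i) = (\<Sum>j<L. f (dist v j) * x j)" using SO[OF v(1)] v by (simp add: add.assoc)
      ultimately show ?thesis using LO[OF v(1)] v by (simp add: add.assoc)
    qed
  qed
qed

lemma cost: "sum_list (map vcost es) \<le> 10 * N * L"
proof -
  have "sum_list (map vcost es) = (\<Sum>i<2*N*L + L. vcost (defn i))"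
    by (simp add: es_def sum_list_distinct_conv_sum_set atLeast0LessThan comp_def)
  also have "\<dots> = (\<Sum>i<N*L. vcost (defn i)) + (\<Sum>i<N*L. vcost (defn (N*L + i)))
      + (\<Sum>i<L. vcost (defn (2*N*L + i)))"
  proof -
    have "(\<Sum>i<2*N*L + L. vcost (defn i)) = (\<Sum>i<2*N*L. vcost (defn i)) + (\<Sum>i<L. vcost (defn (2*N*L + i)))"
      by (rule sum_lessThan_plus)
    moreover have "(\<Sum>i<2*N*L. vcost (defn i)) = (\<Sum>i<N*L + N*L. vcost (defn i))"
    proof -
      have e: "2*N*L = N*L + N*L" by simp
      show ?thesis by (simp only: e)
    qed
    moreover have "(\<Sum>i<N*L + N*L. vcost (defn i)) = (\<Sum>i<N*L. vcost (defn i)) + (\<Sum>i<N*L. vcost (defn (N*L + i)))"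
      by (rule sum_lessThan_plus)
    ultimately show ?thesis by simp
  qed
  also have "\<dots> \<le> 3*N*L + 4*N*L + (1 + 2*N)*L"
  proof (intro add_mono)
    have sd: "(\<Sum>v<L. 2 + length (children v)) = 2*L + (\<Sum>v<L. length (children v))"
      by (subst sum.distrib) simp
    have "(\<Sum>i<N*L. vcost (defn i)) = (\<Sum>k<N. \<Sum>v<L. vcost (defn (k*L+v)))" by (rule sum_blocks)
    also have "\<dots> = (\<Sum>k<N. \<Sum>v<L. vcost (Dexp k v))"
      using idx_lt by (intro sum.cong refl) (simp add: defn_def)
    also have "\<dots> \<le> (\<Sum>k<N. \<Sum>v<L. 2 + length (children v))"
      by (intro sum_mono) (simp add: Dexp_def)
    also have "\<dots> = N * (2*L + (\<Sum>v<L. length (children v)))" using sd by simp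
    also have "\<dots> \<le> N * (3*L)" using children_total by simp
    finally show "(\<Sum>i<N*L. vcost (defn i)) \<le> 3*N*L" by simp
  next
    have "(\<Sum>i<N*L. vcost (defn (N*L + i))) = (\<Sum>i<N*L. vcost (Uexp (i div L) (i mod L)))"
      by (intro sum.cong refl) (simp add: defn_def mult.commute)
    also have "\<dots> \<le> (\<Sum>i<N*L. 4)" by (intro sum_mono) (simp add: Uexp_def)
    finally show "(\<Sum>i<N*L. vcost (defn (N*L + i))) \<le> 4*N*L" by simp
  next
    have "(\<Sum>i<L. vcost (defn (2*N*L + i))) = (\<Sum>i<L. 1 + 2*N)"
      by (intro sum.cong refl) (simp add: defn_def Oexp_def)
    then show "(\<Sum>i<L. vcost (defn (2*N*L + i))) \<le> (1 + 2*N)*L" by simp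
  qed
  also have "\<dots> \<le> 10 * N * L" using N_def by (simp add: algebra_simps)
  finally show ?thesis .
qed

lemma len_es: "length es = 2*N*L + L" by (simp add: es_def)

lemma nth_es: "i < length es \<Longrightarrow> es ! i = defn i" by (simp add: es_def len_es)

lemma log_bound: "real (10 * N * L) \<le> 30 * real L * log 2 (real L)"
proof -
  have "2 ^ H \<le> L" using L_bound by simp
  then have hl: "real H \<le> log 2 (real L)" using le_log2_of_power by blast
  have "1 \<le> H" using hH by simp
  then have "real (10 * N) \<le> 30 * real H" by (simp add: N_def)
  also have "\<dots> \<le> 30 * log 2 (real L)" using hl by simp
  finally have "real (10 * N) * real L \<le> 30 * log 2 (real L) * real L"
    by (rule mult_right_mono) simp
  then show ?thesis by (simp add: algebra_simps)
qed

end



lemma len_comp: "length (fst (compile_vs pos n es)) = sum_list (map vcost es)"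
  by (induction es arbitrary: pos n) (simp_all add: Let_def)

theorem corollary6p3:
  "\<exists>C::real. \<forall>L E. good_tree L E \<longrightarrow>
     (\<exists>(p::instr list) (outs::nat list).
        real (length p) \<le> C * real L * log 2 (real L) \<and>
        length outs = L \<and>
        (\<forall>(f::nat \<Rightarrow> real) (x::nat \<Rightarrow> real).
           let m = run p (map f [0..<L] @ map x [0..<L]) in
           (\<forall>i < L. outs ! i < length m \<and>
              m ! (outs ! i) = (\<Sum>j<L. f (tree_dist E i j) * x j))))"
proof (intro exI[of _ 30] allI impI)
  fix L E assume gtr: "good_tree L E"
  then obtain r h where t: "is_tree L E" and r: "r < L" "2 \<le> degree L E r"
    "\<forall>v. is_leaf L E v \<longrightarrow> tree_dist E r v = h"
    "\<forall>v<L. v \<noteq> r \<and> \<not> is_leaf L E v \<longrightarrow> 3 \<le> degree L E v"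
    unfolding good_tree_def by blast
  interpret G: gt L E r h using t r by (simp add: gt_def tr_def gt_axioms_def)
  define res where "res = compile_vs [0..<2*L] (2*L) G.es"
  define p where "p = fst res"
  define pos' where "pos' = snd res"
  define outs where "outs = map (\<lambda>v. pos' ! (2*L + 2*G.N*L + v)) [0..<L]"
  have lp: "length p = sum_list (map vcost G.es)" by (simp add: p_def res_def len_comp)
  have cst: "real (length p) \<le> 30 * real L * log 2 (real L)"
  proof -
    have "real (length p) \<le> real (10 * G.N * L)" using lp G.cost by linarith
    then show ?thesis using G.log_bound by linarith
  qed
  show "\<exists>(p::instr list) (outs::nat list).
        real (length p) \<le> 30 * real L * log 2 (real L) \<and>
        length outs = L \<and>
        (\<forall>(f::nat \<Rightarrow> real) (x::nat \<Rightarrow> real).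
           let m = run p (map f [0..<L] @ map x [0..<L]) in
           (\<forall>i < L. outs ! i < length m \<and>
              m ! (outs ! i) = (\<Sum>j<L. f (tree_dist E i j) * x j)))"
  proof (intro exI[of _ p] exI[of _ outs] conjI allI)
    show "real (length p) \<le> 30 * real L * log 2 (real L)" using cst .
    show "length outs = L" by (simp add: outs_def)
    fix f :: "nat \<Rightarrow> real" and x :: "nat \<Rightarrow> real"
    define vs0 where "vs0 = map f [0..<L] @ map x [0..<L]"
    have lv: "length vs0 = 2*L" by (simp add: vs0_def)
    have c1: "\<forall>t<length vs0. vs0!t = G.S f x t"
      by (auto simp: vs0_def G.S_def nth_append)
    have c2: "\<forall>i<length G.es. (\<forall>t\<in>refs (G.es!i). t < length vs0 + i) \<and>
        evalv (G.S f x) (G.es!i) = G.S f x (length vs0 + i)"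
      using G.Lall G.nth_es G.len_es lv by simp
    have vr: "length (vrun vs0 G.es) = length vs0 + length G.es \<and>
        (\<forall>t<length vs0 + length G.es. vrun vs0 G.es ! t = G.S f x t)"
      by (rule vrun_spec[OF c1 c2])
    have c3: "\<forall>i<length G.es. \<forall>t\<in>refs (G.es!i). t < length vs0 + i" using c2 by blast
    have cr: "length (snd (compile_vs [0..<2*L] (2*L) G.es)) = length (vrun vs0 G.es) \<and>
      (\<forall>i<length (vrun vs0 G.es). snd (compile_vs [0..<2*L] (2*L) G.es) ! i < length (run (fst (compile_vs [0..<2*L] (2*L) G.es)) vs0) \<and>
       run (fst (compile_vs [0..<2*L] (2*L) G.es)) vs0 ! (snd (compile_vs [0..<2*L] (2*L) G.es) ! i) = vrun vs0 G.es ! i) \<and>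
      length (fst (compile_vs [0..<2*L] (2*L) G.es)) = sum_list (map vcost G.es)"
      by (rule comp_run) (use lv c3 in auto)
    show "let m = run p (map f [0..<L] @ map x [0..<L]) in
           (\<forall>i < L. outs ! i < length m \<and>
              m ! (outs ! i) = (\<Sum>j<L. f (tree_dist E i j) * x j))"
      unfolding Let_def vs0_def[symmetric]
    proof (intro allI impI)
      fix i assume i: "i < L"
      define idx where "idx = 2*L + 2*G.N*L + i"
      have o: "idx < length (vrun vs0 G.es)" using vr lv G.len_es i by (simp add: idx_def)
      have oi: "outs ! i = pos' ! idx" using i by (simp add: outs_def idx_def)
      have "vrun vs0 G.es ! idx = G.S f x idx" using vr o by simp
      also have "\<dots> = (\<Sum>j<L. f (tree_dist E i j) * x j)" using G.SO[OF i] by (simp add: idx_def)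
      finally have "vrun vs0 G.es ! idx = (\<Sum>j<L. f (tree_dist E i j) * x j)" .
      then show "outs ! i < length (run p vs0) \<and>
          run p vs0 ! (outs ! i) = (\<Sum>j<L. f (tree_dist E i j) * x j)"
        using cr o oi by (simp add: p_def pos'_def res_def)
    qed
  qed
qed


end
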